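(* Let $k$ be a finite field, $r\ge2$, and $n\in\mathbb{N}$ with $n\le r$. For elements $b_1,\dots,b_n\in F_r$, the formula $\varphi(x_1,\dots,x_n)\equiv\bigwedge_{(\alpha_1,\dots,\alpha_n)\in k^n\setminus\{0\}}\neg\mathrm{Fit}(\alpha_1x_1+\dots+\alpha_nx_n)$, where $\mathrm{Fit}(x)\equiv\forall y\,(xyx=0)$, holds on $(b_1,\dots,b_n)$ in $F_r$ if and only if $b_1,\dots,b_n$ are linearly independent modulo $\mathrm{Fit}(F_r)$.
   Context: $F_r$ is the free metabelian Lie algebra over $k$ of rank $r$; products are left-normed; $\mathrm{Fit}(F_r)$ is its Fitting radical (sum of all nilpotent ideals), which equals the derived algebra $F_r^2$. *)

theory Defs
  imports Main "HOL-Library.Poly_Mapping"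
begin

text \<open>Free non-associative (magma) algebra over a field k: finitely supported
  k-linear combinations of binary bracketings (trees) of generators.\<close>

datatype mtree = MLeaf nat | MNode mtree mtree

fun leaves :: "mtree \<Rightarrow> nat set" where
  "leaves (MLeaf i) = {i}"
| "leaves (MNode s t) = leaves s \<union> leaves t"

type_synonym 'k magma_alg = "mtree \<Rightarrow>\<^sub>0 'k"

definition gen :: "nat \<Rightarrow> 'k::{zero,one} magma_alg" where
  "gen i = Poly_Mapping.single (MLeaf i) 1"

definition mmult :: "'k::comm_ring_1 magma_alg \<Rightarrow> 'k magma_alg \<Rightarrow> 'k magma_alg" where
  "mmult p q = (\<Sum>s\<in>Poly_Mapping.keys p. \<Sum>t\<in>Poly_Mapping.keys q.
       Poly_Mapping.single (MNode s t) (Poly_Mapping.lookup p s * Poly_Mapping.lookup q t))"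

definition msmult :: "'k::comm_ring_1 \<Rightarrow> 'k magma_alg \<Rightarrow> 'k magma_alg" where
  "msmult a p = Poly_Mapping.map (\<lambda>c. a * c) p"

definition magma :: "nat \<Rightarrow> 'k::comm_ring_1 magma_alg set" where
  "magma r = {p. \<forall>t\<in>Poly_Mapping.keys p. leaves t \<subseteq> {..<r}}"

text \<open>The ideal of the free magma algebra of rank r generated by all
  substitution instances of the identities x x = 0, the Jacobi identity and
  the metabelian identity (x y)(z w) = 0.  The quotient magma r / mb_ideal r
  is the free metabelian Lie algebra F_r of rank r.\<close>
inductive_set mb_ideal :: "nat \<Rightarrow> 'k::comm_ring_1 magma_alg set" for r :: nat where
  alt: "x \<in> magma r \<Longrightarrow> mmult x x \<in> mb_ideal r"
| jacobi: "x \<in> magma r \<Longrightarrow> y \<in> magma r \<Longrightarrow> z \<in> magma r \<Longrightarrow>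
     mmult (mmult x y) z + mmult (mmult y z) x + mmult (mmult z x) y \<in> mb_ideal r"
| metab: "x \<in> magma r \<Longrightarrow> y \<in> magma r \<Longrightarrow> z \<in> magma r \<Longrightarrow> w \<in> magma r \<Longrightarrow>
     mmult (mmult x y) (mmult z w) \<in> mb_ideal r"
| zero: "0 \<in> mb_ideal r"
| add: "a \<in> mb_ideal r \<Longrightarrow> b \<in> mb_ideal r \<Longrightarrow> a + b \<in> mb_ideal r"
| smult: "a \<in> mb_ideal r \<Longrightarrow> msmult c a \<in> mb_ideal r"
| multR: "a \<in> mb_ideal r \<Longrightarrow> y \<in> magma r \<Longrightarrow> mmult a y \<in> mb_ideal r"
| multL: "a \<in> mb_ideal r \<Longrightarrow> y \<in> magma r \<Longrightarrow> mmult y a \<in> mb_ideal r"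

text \<open>Equality in F_r of the classes of two representatives.\<close>
definition fr_eq :: "nat \<Rightarrow> 'k::comm_ring_1 magma_alg \<Rightarrow> 'k magma_alg \<Rightarrow> bool" where
  "fr_eq r p q \<longleftrightarrow> p - q \<in> mb_ideal r"

inductive_set magma_sq :: "nat \<Rightarrow> 'k::comm_ring_1 magma_alg set" for r :: nat where
  prod: "x \<in> magma r \<Longrightarrow> y \<in> magma r \<Longrightarrow> mmult x y \<in> magma_sq r"
| zero: "0 \<in> magma_sq r"
| add: "a \<in> magma_sq r \<Longrightarrow> b \<in> magma_sq r \<Longrightarrow> a + b \<in> magma_sq r"
| smult: "a \<in> magma_sq r \<Longrightarrow> msmult c a \<in> magma_sq r"

text \<open>The class of p lies in Fit(F_r) = F_r^2 (the image of magma_sq r).\<close>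
definition in_Fit_Fr :: "nat \<Rightarrow> 'k::comm_ring_1 magma_alg \<Rightarrow> bool" where
  "in_Fit_Fr r p \<longleftrightarrow> (\<exists>d\<in>magma_sq r. fr_eq r p d)"

text \<open>The first-order formula Fit(x) == forall y. x y x = 0, evaluated in F_r
  on the class of x (y ranges over representatives of all elements of F_r).\<close>
definition Fit_formula :: "nat \<Rightarrow> 'k::comm_ring_1 magma_alg \<Rightarrow> bool" where
  "Fit_formula r x \<longleftrightarrow> (\<forall>y\<in>magma r. fr_eq r (mmult (mmult x y) x) 0)"

definition lincomb :: "nat \<Rightarrow> (nat \<Rightarrow> 'k::comm_ring_1) \<Rightarrow> (nat \<Rightarrow> 'k magma_alg) \<Rightarrow> 'k magma_alg" where
  "lincomb n \<alpha> b = (\<Sum>i<n. msmult (\<alpha> i) (b i))"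

definition phi_holds :: "nat \<Rightarrow> nat \<Rightarrow> (nat \<Rightarrow> 'k::comm_ring_1 magma_alg) \<Rightarrow> bool" where
  "phi_holds r n b \<longleftrightarrow>
     (\<forall>\<alpha>::nat \<Rightarrow> 'k. (\<exists>i<n. \<alpha> i \<noteq> 0) \<longrightarrow> \<not> Fit_formula r (lincomb n \<alpha> b))"

definition lin_indep_mod_Fit :: "nat \<Rightarrow> nat \<Rightarrow> (nat \<Rightarrow> 'k::comm_ring_1 magma_alg) \<Rightarrow> bool" where
  "lin_indep_mod_Fit r n b \<longleftrightarrow>
     (\<forall>\<alpha>::nat \<Rightarrow> 'k. in_Fit_Fr r (lincomb n \<alpha> b) \<longrightarrow> (\<forall>i<n. \<alpha> i = 0))"

end

theory Submission imports Defs begin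

lemma lookup_msmult[simp]: "Poly_Mapping.lookup (msmult a p) t = a * Poly_Mapping.lookup p t" for p :: "'k::comm_ring_1 magma_alg"
  unfolding msmult_def by (simp add: Poly_Mapping.map.rep_eq when_def)

lemma lookup_mmult_gen: fixes p q :: "'k::comm_ring_1 magma_alg" shows "Poly_Mapping.lookup (mmult p q) u =
   (case u of MLeaf i \<Rightarrow> 0 | MNode s t \<Rightarrow> Poly_Mapping.lookup p s * Poly_Mapping.lookup q t)"
proof -
  have "Poly_Mapping.lookup (mmult p q) u = (\<Sum>s\<in>Poly_Mapping.keys p. \<Sum>t\<in>Poly_Mapping.keys q. (if MNode s t = u then Poly_Mapping.lookup p s * Poly_Mapping.lookup q t else 0))"
    unfolding mmult_def by (simp add: lookup_sum lookup_single when_def)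
  also have "\<dots> = (case u of MLeaf i \<Rightarrow> 0 | MNode s t \<Rightarrow> Poly_Mapping.lookup p s * Poly_Mapping.lookup q t)"
  proof (cases u)
    case (MLeaf i) then show ?thesis by simp
  next
    case (MNode s0 t0)
    have "(\<Sum>s\<in>Poly_Mapping.keys p. \<Sum>t\<in>Poly_Mapping.keys q. (if MNode s t = u then Poly_Mapping.lookup p s * Poly_Mapping.lookup q t else 0))
       = (\<Sum>s\<in>Poly_Mapping.keys p. if s = s0 then (\<Sum>t\<in>Poly_Mapping.keys q. if t = t0 then Poly_Mapping.lookup p s * Poly_Mapping.lookup q t else 0) else 0)"
      using MNode by (intro sum.cong) auto
    also have "\<dots> = Poly_Mapping.lookup p s0 * Poly_Mapping.lookup q t0"
      by (simp add: in_keys_iff)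
    finally show ?thesis using MNode by simp
  qed
  finally show ?thesis .
qed

lemma lookup_mmult_node[simp]: "Poly_Mapping.lookup (mmult p q) (MNode s t) = Poly_Mapping.lookup p s * Poly_Mapping.lookup q t" for p q :: "'k::comm_ring_1 magma_alg"
  by (simp add: lookup_mmult_gen)
lemma lookup_mmult_leaf[simp]: "Poly_Mapping.lookup (mmult p q) (MLeaf i) = 0" for p q :: "'k::comm_ring_1 magma_alg"
  by (simp add: lookup_mmult_gen)


lemma mmult_add_left: "mmult (a + b) c = mmult a c + mmult b c" for a b c :: "'k::comm_ring_1 magma_alg"
  by (rule poly_mapping_eqI) (simp add: lookup_add lookup_mmult_gen algebra_simps split: mtree.split)
lemma mmult_add_right: "mmult c (a + b) = mmult c a + mmult c b" for a b c :: "'k::comm_ring_1 magma_alg"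
  by (rule poly_mapping_eqI) (simp add: lookup_add lookup_mmult_gen algebra_simps split: mtree.split)
lemma mmult_zero_left[simp]: "mmult 0 c = 0" for c :: "'k::comm_ring_1 magma_alg"
  by (rule poly_mapping_eqI) (simp add: lookup_mmult_gen split: mtree.split)
lemma mmult_zero_right[simp]: "mmult c 0 = 0" for c :: "'k::comm_ring_1 magma_alg"
  by (rule poly_mapping_eqI) (simp add: lookup_mmult_gen split: mtree.split)
lemma mmult_msmult_right: "mmult c (msmult a b) = msmult a (mmult c b)" for b c :: "'k::comm_ring_1 magma_alg"
  by (rule poly_mapping_eqI) (simp add: lookup_mmult_gen algebra_simps split: mtree.split)
lemma msmult_neg: "msmult (-1) a = - a" for a :: "'k::comm_ring_1 magma_alg"
  by (rule poly_mapping_eqI) simp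

lemma keys_mmult: "t \<in> Poly_Mapping.keys (mmult p q) \<Longrightarrow>
   \<exists>s u. t = MNode s u \<and> s \<in> Poly_Mapping.keys p \<and> u \<in> Poly_Mapping.keys q"
  for p q :: "'k::comm_ring_1 magma_alg"
  by (cases t) (auto simp: in_keys_iff)

lemma keys_msmult: "t \<in> Poly_Mapping.keys (msmult c a) \<Longrightarrow> t \<in> Poly_Mapping.keys a"
  for a :: "'k::comm_ring_1 magma_alg"
  unfolding in_keys_iff by auto

lemma magma_zero[simp]: "0 \<in> magma r"
  by (simp add: magma_def)
lemma magma_add:
  fixes a b :: "'k::comm_ring_1 magma_alg"
  assumes a: "a \<in> magma r" and b: "b \<in> magma r" shows "a + b \<in> magma r"
  unfolding magma_def mem_Collect_eq
proof
  fix t assume "t \<in> Poly_Mapping.keys (a + b)"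
  then have "t \<in> Poly_Mapping.keys a \<union> Poly_Mapping.keys b" using keys_add by (rule subsetD[rotated])
  then show "leaves t \<subseteq> {..<r}" using a b unfolding magma_def mem_Collect_eq by (meson UnE)
qed
lemma magma_msmult: "a \<in> magma r \<Longrightarrow> msmult c a \<in> magma r" for a :: "'k::comm_ring_1 magma_alg"
  unfolding magma_def by (auto simp: in_keys_iff)
lemma magma_mmult: "a \<in> magma r \<Longrightarrow> b \<in> magma r \<Longrightarrow> mmult a b \<in> magma r" for a b :: "'k::comm_ring_1 magma_alg"
  unfolding magma_def by (fastforce dest: keys_mmult)
lemma magma_sum: "finite A \<Longrightarrow> (\<And>i. i \<in> A \<Longrightarrow> f i \<in> magma r) \<Longrightarrow> sum f A \<in> magma r"
  for f :: "_ \<Rightarrow> 'k::comm_ring_1 magma_alg"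
  by (induction A rule: finite_induct) (simp_all add: magma_add)
lemma magma_sq_magma: "d \<in> magma_sq r \<Longrightarrow> d \<in> magma r" for d :: "'k::comm_ring_1 magma_alg"
  by (induction rule: magma_sq.induct) (simp_all add: magma_add magma_msmult magma_mmult)

lemma ideal_neg: "a \<in> mb_ideal r \<Longrightarrow> - a \<in> mb_ideal r" for a :: "'k::comm_ring_1 magma_alg"
  using mb_ideal.smult[of a r "-1"] by (simp add: msmult_neg)

lemma metab_sq: "d \<in> magma_sq r \<Longrightarrow> e1 \<in> magma r \<Longrightarrow> e2 \<in> magma r \<Longrightarrow> mmult (mmult e1 e2) d \<in> mb_ideal r"
  for d :: "'k::comm_ring_1 magma_alg"
proof (induction rule: magma_sq.induct)
  case (prod x y) then show ?case by (rule_tac mb_ideal.metab) auto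
next
  case zero then show ?case by (simp add: mb_ideal.zero)
next
  case (add a b) then show ?case by (simp add: mmult_add_right mb_ideal.add)
next
  case (smult a c) then show ?case by (simp add: mmult_msmult_right mb_ideal.smult)
qed

lemma easy_dir:
  fixes x d y :: "'k::comm_ring_1 magma_alg"
  assumes x: "x \<in> magma r" and d: "d \<in> magma_sq r" and xd: "x - d \<in> mb_ideal r" and y: "y \<in> magma r"
  shows "mmult (mmult x y) x \<in> mb_ideal r"
proof -
  have dm: "d \<in> magma r" using d by (rule magma_sq_magma)
  define e where "e = x - d"
  have xe: "x = e + d" by (simp add: e_def)
  have "mmult (mmult (e + d) y) (e + d) = mmult (mmult e y) (e + d) + mmult (mmult d y) e + mmult (mmult d y) d"
    by (simp only: mmult_add_left mmult_add_right add_ac)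
  then have "mmult (mmult x y) x = mmult (mmult (x - d) y) x + mmult (mmult d y) (x - d) + mmult (mmult d y) d"
    by (simp add: xe[symmetric] e_def)
  moreover have "mmult (mmult (x - d) y) x \<in> mb_ideal r"
    using xd y x by (intro mb_ideal.multR)
  moreover have "mmult (mmult d y) (x - d) \<in> mb_ideal r"
    using xd y dm by (intro mb_ideal.multL magma_mmult)
  moreover have "mmult (mmult d y) d \<in> mb_ideal r"
    using d dm y by (rule metab_sq)
  ultimately show ?thesis by (simp add: mb_ideal.add)
qed

definition phi :: "(mtree \<Rightarrow> 'k::comm_ring_1) \<Rightarrow> 'k magma_alg \<Rightarrow> 'k" where
  "phi f p = (\<Sum>t\<in>Poly_Mapping.keys p. Poly_Mapping.lookup p t * f t)"

lemma phi_sup: "finite S \<Longrightarrow> Poly_Mapping.keys p \<subseteq> S \<Longrightarrow> phi f p = (\<Sum>t\<in>S. Poly_Mapping.lookup p t * f t)"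
  unfolding phi_def by (rule sum.mono_neutral_left) (auto simp: in_keys_iff)

lemma phi_add: "phi f (a + b) = phi f a + phi f b"
proof -
  let ?S = "Poly_Mapping.keys a \<union> Poly_Mapping.keys b"
  have "phi f (a + b) = (\<Sum>t\<in>?S. Poly_Mapping.lookup (a+b) t * f t)"
    by (rule phi_sup) (auto dest: keys_add[THEN subsetD])
  also have "\<dots> = (\<Sum>t\<in>?S. Poly_Mapping.lookup a t * f t) + (\<Sum>t\<in>?S. Poly_Mapping.lookup b t * f t)"
    by (simp add: lookup_add distrib_right sum.distrib)
  also have "\<dots> = phi f a + phi f b"
    by (simp add: phi_sup[of ?S a] phi_sup[of ?S b])
  finally show ?thesis .
qed

lemma phi_msmult: "phi f (msmult c a) = c * phi f a"
proof -
  have "phi f (msmult c a) = (\<Sum>t\<in>Poly_Mapping.keys a. Poly_Mapping.lookup (msmult c a) t * f t)"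
    by (rule phi_sup) (auto simp: in_keys_iff)
  then show ?thesis by (simp add: phi_def sum_distrib_left mult.assoc)
qed

lemma phi_zero[simp]: "phi f 0 = 0"
  by (simp add: phi_def)

lemma phi_single: "phi f (Poly_Mapping.single t c) = c * f t"
  by (subst phi_sup[of "{t}"]) (auto simp: lookup_single)

lemma phi_mmult: "phi f (mmult p q) = (\<Sum>s\<in>Poly_Mapping.keys p. \<Sum>t\<in>Poly_Mapping.keys q.
      Poly_Mapping.lookup p s * Poly_Mapping.lookup q t * f (MNode s t))"
proof -
  let ?S = "(\<lambda>(s,t). MNode s t) ` (Poly_Mapping.keys p \<times> Poly_Mapping.keys q)"
  have "phi f (mmult p q) = (\<Sum>u\<in>?S. Poly_Mapping.lookup (mmult p q) u * f u)"
    by (rule phi_sup) (auto dest!: keys_mmult)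
  also have "\<dots> = (\<Sum>(s,t)\<in>Poly_Mapping.keys p \<times> Poly_Mapping.keys q. Poly_Mapping.lookup (mmult p q) (MNode s t) * f (MNode s t))"
    by (subst sum.reindex) (auto simp: inj_on_def case_prod_unfold)
  also have "\<dots> = (\<Sum>s\<in>Poly_Mapping.keys p. \<Sum>t\<in>Poly_Mapping.keys q.
      Poly_Mapping.lookup p s * Poly_Mapping.lookup q t * f (MNode s t))"
    by (simp add: sum.cartesian_product)
  finally show ?thesis .
qed

definition ev1 :: "nat \<Rightarrow> mtree \<Rightarrow> 'k::comm_ring_1" where
  "ev1 j t = (if t = MLeaf j then 1 else 0)"

fun ev2 :: "nat \<Rightarrow> nat \<Rightarrow> mtree \<Rightarrow> 'k::comm_ring_1" where
  "ev2 j j' (MLeaf i) = (if i = j' then 1 else 0)"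
| "ev2 j j' (MNode s t) = ev1 j s * ev2 j j' t - ev1 j t * ev2 j j' s"

lemma phi1_mmult: "phi (ev1 j) (mmult p q) = 0"
  by (simp add: phi_mmult ev1_def)

lemma phi2_mmult: "phi (ev2 j j') (mmult p q) =
   phi (ev1 j) p * phi (ev2 j j') q - phi (ev1 j) q * phi (ev2 j j') p"
proof -
  let ?P = "Poly_Mapping.lookup p" and ?Q = "Poly_Mapping.lookup q"
  let ?e1 = "ev1 j :: mtree \<Rightarrow> 'a" and ?e2 = "ev2 j j'"
  have "phi ?e2 (mmult p q) = (\<Sum>s\<in>Poly_Mapping.keys p. \<Sum>t\<in>Poly_Mapping.keys q.
      (?P s * ?e1 s) * (?Q t * ?e2 t) - (?Q t * ?e1 t) * (?P s * ?e2 s))"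
    by (simp add: phi_mmult algebra_simps)
  also have "\<dots> = (\<Sum>s\<in>Poly_Mapping.keys p. \<Sum>t\<in>Poly_Mapping.keys q. (?P s * ?e1 s) * (?Q t * ?e2 t))
      - (\<Sum>t\<in>Poly_Mapping.keys q. \<Sum>s\<in>Poly_Mapping.keys p. (?Q t * ?e1 t) * (?P s * ?e2 s))"
    by (simp add: sum_subtractf sum.swap[of _ "Poly_Mapping.keys q"])
  also have "\<dots> = phi ?e1 p * phi ?e2 q - phi ?e1 q * phi ?e2 p"
    by (simp add: phi_def sum_product)
  finally show ?thesis .
qed

lemma phi1_lookup: "phi (ev1 j) p = Poly_Mapping.lookup p (MLeaf j)"
  by (simp add: phi_def ev1_def in_keys_iff if_distrib cong: if_cong)

lemma ideal_phi: "a \<in> mb_ideal r \<Longrightarrow> phi (ev1 j) a = 0 \<and> phi (ev2 j j') a = (0::'k::comm_ring_1)"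
proof (induction rule: mb_ideal.induct)
  case (jacobi x y z)
  then show ?case by (simp add: phi_add phi1_mmult phi2_mmult algebra_simps)
qed (simp_all add: phi_add phi_msmult phi1_mmult phi2_mmult)

lemma pm_sum_single: "p = (\<Sum>t\<in>Poly_Mapping.keys p. Poly_Mapping.single t (Poly_Mapping.lookup p t))"
  for p :: "'k::comm_ring_1 magma_alg"
  by (rule poly_mapping_eqI) (simp add: lookup_sum lookup_single when_def in_keys_iff)

lemma magma_sq_sum: "finite A \<Longrightarrow> (\<And>i. i \<in> A \<Longrightarrow> f i \<in> magma_sq r) \<Longrightarrow> sum f A \<in> magma_sq r"
  for f :: "_ \<Rightarrow> 'k::comm_ring_1 magma_alg"
  by (induction A rule: finite_induct) (simp_all add: magma_sq.add magma_sq.zero)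

lemma single_node: "Poly_Mapping.single (MNode s u) c = msmult c (mmult (Poly_Mapping.single s 1) (Poly_Mapping.single u 1))"
  for c :: "'k::comm_ring_1"
  by (rule poly_mapping_eqI) (simp add: lookup_mmult_gen lookup_single when_def split: mtree.split)

lemma single_magma: "leaves s \<subseteq> {..<r} \<Longrightarrow> Poly_Mapping.single s (1::'k::comm_ring_1) \<in> magma r"
  unfolding magma_def mem_Collect_eq by (cases "(1::'k) = 0") simp_all

lemma leafzero_sq:
  fixes x :: "'k::comm_ring_1 magma_alg"
  assumes x: "x \<in> magma r" and z: "\<forall>j. Poly_Mapping.lookup x (MLeaf j) = 0"
  shows "x \<in> magma_sq r"
proof -
  have "(\<Sum>t\<in>Poly_Mapping.keys x. Poly_Mapping.single t (Poly_Mapping.lookup x t)) \<in> magma_sq r"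
  proof (rule magma_sq_sum)
    fix t assume t: "t \<in> Poly_Mapping.keys x"
    then have lt: "leaves t \<subseteq> {..<r}" using x unfolding magma_def mem_Collect_eq by (rule bspec[rotated])
    show "Poly_Mapping.single t (Poly_Mapping.lookup x t) \<in> magma_sq r"
    proof (cases t)
      case (MLeaf i)
      then have False using t z by (simp add: in_keys_iff)
      then show ?thesis ..
    next
      case (MNode s u)
      have "leaves s \<subseteq> {..<r}" "leaves u \<subseteq> {..<r}" using lt MNode by simp_all
      then show ?thesis unfolding MNode single_node
        by (intro magma_sq.smult magma_sq.prod single_magma)
    qed
  qed simp
  then show ?thesis using pm_sum_single[of x] by simp
qed


lemma phi_gen: "phi f (gen i) = f (MLeaf i)"
  by (simp add: gen_def phi_single)

lemma gen_magma: "i < r \<Longrightarrow> (gen i :: 'k::comm_ring_1 magma_alg) \<in> magma r"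
  unfolding gen_def by (rule single_magma) simp

lemma Fit_iff:
  fixes x :: "'k::field magma_alg"
  assumes r: "r \<ge> 2" and x: "x \<in> magma r"
  shows "Fit_formula r x \<longleftrightarrow> in_Fit_Fr r x"
proof
  assume F: "Fit_formula r x"
  show "in_Fit_Fr r x"
  proof (rule ccontr)
    assume nF: "\<not> in_Fit_Fr r x"
    have "\<exists>j. Poly_Mapping.lookup x (MLeaf j) \<noteq> 0"
    proof (rule ccontr)
      assume "\<nexists>j. Poly_Mapping.lookup x (MLeaf j) \<noteq> 0"
      then have "x \<in> magma_sq r" using x by (intro leafzero_sq) auto
      moreover have "fr_eq r x x" by (simp add: fr_eq_def mb_ideal.zero)
      ultimately show False using nF unfolding in_Fit_Fr_def by blast
    qed
    then obtain j where j: "Poly_Mapping.lookup x (MLeaf j) \<noteq> 0" by blast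
    define j' where "j' = (if j = 0 then 1 else (0::nat))"
    have jj: "j' \<noteq> j" by (simp add: j'_def)
    have j'r: "j' < r" using r by (simp add: j'_def)
    define y where "y = (gen j' :: 'k magma_alg)"
    have ym: "y \<in> magma r" unfolding y_def using j'r by (rule gen_magma)
    have "fr_eq r (mmult (mmult x y) x) 0" using F ym unfolding Fit_formula_def by blast
    then have "mmult (mmult x y) x \<in> mb_ideal r" by (simp add: fr_eq_def)
    then have "phi (ev2 j j') (mmult (mmult x y) x) = (0::'k)" using ideal_phi by blast
    moreover have "phi (ev1 j) y = (0::'k)" "phi (ev2 j j') y = (1::'k)"
      using jj by (simp_all add: y_def phi_gen ev1_def)
    ultimately have "Poly_Mapping.lookup x (MLeaf j) * Poly_Mapping.lookup x (MLeaf j) = 0"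
      by (simp add: phi2_mmult phi1_mmult phi1_lookup)
    then show False using j by simp
  qed
next
  assume "in_Fit_Fr r x"
  then obtain d where d: "d \<in> magma_sq r" and xd: "x - d \<in> mb_ideal r"
    unfolding in_Fit_Fr_def fr_eq_def by blast
  show "Fit_formula r x"
    unfolding Fit_formula_def fr_eq_def
    using easy_dir[OF x d xd] by simp
qed

theorem lemma3p4:
  fixes r n :: nat and b :: "nat \<Rightarrow> 'k::{field,finite} magma_alg"
  assumes "r \<ge> 2" and "n \<le> r"
    and "\<forall>i<n. b i \<in> magma r"
  shows "phi_holds r n b \<longleftrightarrow> lin_indep_mod_Fit r n b"
proof -
  have lm: "lincomb n \<alpha> b \<in> magma r" for \<alpha>
    unfolding lincomb_def using assms(3) by (intro magma_sum magma_msmult) auto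
  have eq: "Fit_formula r (lincomb n \<alpha> b) \<longleftrightarrow> in_Fit_Fr r (lincomb n \<alpha> b)" for \<alpha>
    using Fit_iff[OF assms(1) lm] .
  show ?thesis unfolding phi_holds_def lin_indep_mod_Fit_def eq by blast
qed

end
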